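(* Let $u^m\in\mathbb{P}^{\mathrm{disc}}_0(\mathcal{T}_h)$ and $v^m\in\mathbb{P}^{\mathrm{cont}}_1(\mathcal{T}_h)$ be given with $u^m\ge 0$ in $\Omega$ and, in the case $\tau>0$, $v^m\ge 0$ in $\Omega$. Then any solution $(v^{m+1},u^{m+1},\mu_\varepsilon^{m+1})$ of the fully discrete scheme (Step 1 and Step 2 described in the context) satisfies $u^{m+1}\ge 0$ and $v^{m+1}\ge 0$ in $\Omega$.
   Context: Let $\Omega\subset\mathbb{R}^2$ be a bounded polygonal domain and $\mathcal{T}_h$ a shape-regular triangular mesh of $\overline\Omega$ of size $h$. $\mathcal{E}_h^i$ denotes the set of interior edges. For an interior edge $e=\partial K\cap\partial L$ the two adjacent triangles are labelled $K,L$ so that the unit normal $\mathbf{n}_e$ points from $K$ to $L$; for a function $w$, $w_K,w_L$ are its traces from $K$ and $L$ and the jump is $[\![w]\!]=w_K-w_L$. $C_K$ denotes the barycenter of $K$, and $\mathcal{D}_e=|C_K-C_L|$ for $e=K\cap L\in\mathcal{E}_h^i$. The mesh is assumed to satisfy: (H1) for every interior edge $e=K\cap L$, the segment joining $C_K$ and $C_L$ is orthogonal to $e$; (H2) every angle of every triangle of $\mathcal{T}_h$ is at most $\pi/2$. $\mathbb{P}^{\mathrm{disc}}_0(\mathcal{T}_h)$ is the space of piecewise constant functions on $\mathcal{T}_h$, $\mathbb{P}^{\mathrm{cont}}_1(\mathcal{T}_h)$ the space of continuous piecewise linear functions, and $\Pi_0$ the $L^2(\Omega)$-orthogonal projection onto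 $\mathbb{P}^{\mathrm{disc}}_0(\mathcal{T}_h)$. For a scalar $w$, $w_\oplus=\max\{w,0\}$, $w_\ominus=-\min\{w,0\}$. $(\cdot,\cdot)$ is the $L^2(\Omega)$ inner product and $(f,g)_h=\int_\Omega I_h(fg)$ the mass-lumped inner product, $I_h$ being the nodal $\mathbb{P}_1$ interpolant. The upwind form is $$a^{upw}_h(\mu;u,\bar u)=\int_\Omega(\nabla\mu\cdot\nabla\bar u)\,u+\sum_{e\in\mathcal{E}_h^i,\,e=K\cap L}\frac{1}{\mathcal{D}_e}\int_e\Big(([\![\Pi_0\mu]\!])_\oplus u_K-([\![\Pi_0\mu]\!])_\ominus u_L\Big)[\![\bar u]\!].$$ Parameters: $k_0,\dots,k_4>0$, $\tau\in\{0,1\}$, time step $\Delta t>0$, $\varepsilon>0$; $\delta_t w^{m+1}=(w^{m+1}-w^m)/\Delta t$. The scheme: Step 1: find $v^{m+1}\in\mathbb{P}^{\mathrm{cont}}_1(\mathcal{T}_h)$ with $\tau(\delta_t v^{m+1},\bar v)_h+k_2(\nabla v^{m+1},\nabla\bar v)+k_3(v^{m+1},\bar v)_h-k_4(u^m,\bar v)=0$ for all $\bar v\in\mathbb{P}^{\mathrm{cont}}_1(\mathcal{T}_h)$. Step 2: find $(u^{m+1},\mu_\varepsilon^{m+1})\in\mathbb{P}^{\mathrm{disc}}_0(\mathcal{T}_h)^2$ with $u^{m+1}+\varepsilon>0$ such that $(\delta_t u^{m+1},\bar u)+a^{upw}_h(\mu_\varepsilon^{m+1};(u^{m+1})_\oplus,\bar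 u)=0$ and $(\mu_\varepsilon^{m+1},\bar\mu)-k_0(\log(u^{m+1}+\varepsilon),\bar\mu)+k_1(v^{m+1},\bar\mu)=0$ for all $\bar u,\bar\mu\in\mathbb{P}^{\mathrm{disc}}_0(\mathcal{T}_h)$. *)

theory Defs
  imports "HOL-Analysis.Analysis"
begin

type_synonym point = "real^2"

text \<open>Triangles are represented by their vertex sets.\<close>
definition is_triangle :: "point set \<Rightarrow> bool" where
  "is_triangle K \<longleftrightarrow> card K = 3 \<and> \<not> affine_dependent K"

definition conforming_mesh :: "point set set \<Rightarrow> point set \<Rightarrow> bool" where
  "conforming_mesh T \<Omega> \<longleftrightarrow>
     open \<Omega> \<and> connected \<Omega> \<and> bounded \<Omega> \<and> \<Omega> \<noteq> {} \<and>
     finite T \<and> (\<forall>K\<in>T. is_triangle K) \<and>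
     closure \<Omega> = (\<Union>K\<in>T. convex hull K) \<and>
     (\<forall>K\<in>T. \<forall>L\<in>T. K \<noteq> L \<longrightarrow> convex hull K \<inter> convex hull L = convex hull (K \<inter> L))"

definition area :: "point set \<Rightarrow> real" where
  "area K = measure lebesgue (convex hull K)"

definition barycenter :: "point set \<Rightarrow> point" where
  "barycenter K = (1 / real (card K)) *\<^sub>R (\<Sum>p\<in>K. p)"

text \<open>Interior edges, as ordered pairs (K,L) of distinct triangles sharing an edge K \<inter> L.
  Each interior edge appears twice (as (K,L) and (L,K)).\<close>
definition interior_edge_pairs :: "point set set \<Rightarrow> (point set \<times> point set) set" where
  "interior_edge_pairs T = {(K, L). K \<in> T \<and> L \<in> T \<and> K \<noteq> L \<and> card (K \<inter> L) = 2}"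

definition edge_length :: "point set \<Rightarrow> point set \<Rightarrow> real" where
  "edge_length K L = diameter (K \<inter> L)"

definition D_edge :: "point set \<Rightarrow> point set \<Rightarrow> real" where
  "D_edge K L = dist (barycenter K) (barycenter L)"

definition vangle :: "point \<Rightarrow> point \<Rightarrow> real" where
  "vangle u v = arccos ((u \<bullet> v) / (norm u * norm v))"

definition H1 :: "point set set \<Rightarrow> bool" where
  "H1 T \<longleftrightarrow> (\<forall>(K, L) \<in> interior_edge_pairs T. \<forall>p\<in>K \<inter> L. \<forall>q\<in>K \<inter> L.
       (barycenter K - barycenter L) \<bullet> (p - q) = 0)"

definition H2 :: "point set set \<Rightarrow> bool" where
  "H2 T \<longleftrightarrow> (\<forall>K\<in>T. \<forall>p\<in>K. \<forall>q\<in>K. \<forall>r\<in>K.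
       p \<noteq> q \<and> p \<noteq> r \<and> q \<noteq> r \<longrightarrow> vangle (q - p) (r - p) \<le> pi / 2)"

text \<open>Piecewise constants P0^disc are functions on the triangles (T-indexed values).
  Continuous piecewise linears P1^cont: functions on the plane that are affine on each
  closed triangle (continuity across edges is then automatic).\<close>
definition P1cont :: "point set set \<Rightarrow> (point \<Rightarrow> real) \<Rightarrow> bool" where
  "P1cont T v \<longleftrightarrow> (\<forall>K\<in>T. \<exists>a c. \<forall>x\<in>convex hull K. v x = a \<bullet> x + c)"

definition grad_on :: "point set \<Rightarrow> (point \<Rightarrow> real) \<Rightarrow> point" where
  "grad_on K v = (THE a. \<exists>c. \<forall>x\<in>convex hull K. v x = a \<bullet> x + c)"

definition posp :: "real \<Rightarrow> real" where "posp w = max w 0"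
definition negp :: "real \<Rightarrow> real" where "negp w = - min w 0"

definition L2_00 :: "point set set \<Rightarrow> (point set \<Rightarrow> real) \<Rightarrow> (point set \<Rightarrow> real) \<Rightarrow> real" where
  "L2_00 T u w = (\<Sum>K\<in>T. area K * u K * w K)"

definition L2_01 :: "point set set \<Rightarrow> (point set \<Rightarrow> real) \<Rightarrow> (point \<Rightarrow> real) \<Rightarrow> real" where
  "L2_01 T u v = (\<Sum>K\<in>T. u K * integral (convex hull K) v)"

definition stiff :: "point set set \<Rightarrow> (point \<Rightarrow> real) \<Rightarrow> (point \<Rightarrow> real) \<Rightarrow> real" where
  "stiff T v w = (\<Sum>K\<in>T. area K * (grad_on K v \<bullet> grad_on K w))"

text \<open>Mass-lumped product (f,g)_h = \<integral> I_h(fg), computed elementwise: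
  the P1 interpolant integrates over K to |K|/3 times the sum of its vertex values.\<close>
definition lumped :: "point set set \<Rightarrow> (point \<Rightarrow> real) \<Rightarrow> (point \<Rightarrow> real) \<Rightarrow> real" where
  "lumped T f g = (\<Sum>K\<in>T. area K / 3 * (\<Sum>p\<in>K. f p * g p))"

text \<open>The volume term
  \<integral>(\<nabla>mu\<cdot>\<nabla>ubar)u vanishes (elementwise gradients of P0 functions are zero) and
  Pi_0 mu = mu. Each interior edge is counted twice (once per orientation), whence
  the factor 1/2; the summand is invariant under swapping K and L.\<close>
definition a_upw :: "point set set \<Rightarrow> (point set \<Rightarrow> real) \<Rightarrow> (point set \<Rightarrow> real)
                      \<Rightarrow> (point set \<Rightarrow> real) \<Rightarrow> real" where
  "a_upw T \<mu> u ub = (\<Sum>(K, L)\<in>interior_edge_pairs T.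
      1 / 2 * (edge_length K L / D_edge K L) *
      (posp (\<mu> K - \<mu> L) * u K - negp (\<mu> K - \<mu> L) * u L) * (ub K - ub L))"

end

theory Submission imports Defs begin

lemma tri_finite: "is_triangle K \<Longrightarrow> finite K"
  unfolding is_triangle_def by (metis card.infinite zero_neq_numeral)

lemma tri_interior: "is_triangle K \<Longrightarrow> interior (convex hull K) \<noteq> {}"
  unfolding is_triangle_def
  by (subst interior_convex_hull_eq_empty) auto

lemma tri_area_pos: assumes "is_triangle K" shows "area K > 0"
proof -
  obtain z where z: "z \<in> interior (convex hull K)" using tri_interior[OF assms] by blast
  then obtain r where r: "r > 0" "ball z r \<subseteq> convex hull K"
    using mem_interior by blast
  have cpt: "compact (convex hull K)"
    using tri_finite[OF assms] by (simp add: compact_convex_hull finite_imp_compact)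
  have "0 < Henstock_Kurzweil_Integration.content (ball z r)" using content_ball_pos[OF r(1)] .
  also have "\<dots> \<le> measure lborel (convex hull K)"
    by (rule measure_mono_fmeasurable[OF r(2)]) (auto simp: fmeasurable_compact cpt)
  also have "\<dots> = area K" unfolding area_def
    using cpt by (simp add: compact_imp_closed borel_closed)
  finally show ?thesis .
qed

lemma tri_aff_hull: assumes "is_triangle K" shows "affine hull K = UNIV"
proof -
  have "of_nat (card K) = aff_dim K + 1"
    using assms unfolding is_triangle_def by (metis aff_dim_affine_independent)
  moreover have "card K = 3" using assms unfolding is_triangle_def by simp
  ultimately have "aff_dim K = 2" by simp
  then show ?thesis using aff_dim_eq_full[of K] by simp
qed


lemma affine_eq_on_tri:
  assumes K: "is_triangle K" and eq: "\<forall>x\<in>convex hull K. a \<bullet> x + c = a' \<bullet> x + (c'::real)"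
  shows "a = a'"
proof (rule ccontr)
  assume ne: "a \<noteq> a'"
  obtain z where z: "z \<in> interior (convex hull K)" using tri_interior[OF K] by blast
  then obtain r where r: "r > 0" "ball z r \<subseteq> convex hull K"
    using mem_interior by blast
  define d where "d = a - a'"
  have nd: "norm d > 0" using ne d_def by simp
  define y where "y = z + (r / (2 * norm d)) *\<^sub>R d"
  have "dist z y = r / 2" using nd r unfolding y_def by (simp add: dist_norm)
  then have "y \<in> ball z r" using r by simp
  then have y: "a \<bullet> y + c = a' \<bullet> y + c'" using eq r by blast
  have "z \<in> ball z r" using r by simp
  then have zz: "a \<bullet> z + c = a' \<bullet> z + c'" using eq r by blast
  have "d \<bullet> y = d \<bullet> z" using y zz unfolding d_def by (simp add: inner_diff_left)
  then have "(r / (2 * norm d)) * (d \<bullet> d) = 0" unfolding y_def by (simp add: inner_add_right)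
  moreover have "(r / (2 * norm d)) * (d \<bullet> d) > 0" using nd r by simp
  ultimately show False by linarith
qed

lemma grad_on_eq:
  assumes K: "is_triangle K" and f: "\<forall>x\<in>convex hull K. f x = a \<bullet> x + c"
  shows "grad_on K f = a"
  unfolding grad_on_def
proof (rule the_equality)
  show "\<exists>c. \<forall>x\<in>convex hull K. f x = a \<bullet> x + c" using f by blast
next
  fix a' assume "\<exists>c. \<forall>x\<in>convex hull K. f x = a' \<bullet> x + c"
  then obtain c' where "\<forall>x\<in>convex hull K. f x = a' \<bullet> x + c'" by blast
  then show "a' = a" using affine_eq_on_tri[OF K, of a' c' a c] f by simp
qed

definition bary :: "point set \<Rightarrow> point \<Rightarrow> point \<Rightarrow> real" where
  "bary K p x = (SOME w. sum w K = 1 \<and> (\<Sum>q\<in>K. w q *\<^sub>R q) = x) p"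

lemma bary_ex: "is_triangle K \<Longrightarrow> \<exists>w. sum w K = 1 \<and> (\<Sum>q\<in>K. w q *\<^sub>R q) = x"
  using tri_aff_hull[of K] affine_hull_finite[OF tri_finite, of K] by blast

lemma bary_unique:
  assumes K: "is_triangle K" and w: "sum w K = 1" "(\<Sum>q\<in>K. w q *\<^sub>R q) = x" and p: "p \<in> K"
  shows "bary K p x = w p"
proof -
  define w' where "w' = (SOME w. sum w K = 1 \<and> (\<Sum>q\<in>K. w q *\<^sub>R q) = x)"
  have w': "sum w' K = 1 \<and> (\<Sum>q\<in>K. w' q *\<^sub>R q) = x"
    unfolding w'_def by (rule someI_ex[OF bary_ex[OF K]])
  define U where "U = (\<lambda>q. w' q - w q)"
  have "sum U K = 0" using w w' unfolding U_def by (simp add: sum_subtractf)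
  moreover have "(\<Sum>q\<in>K. U q *\<^sub>R q) = 0" using w w' unfolding U_def
    by (simp add: scaleR_diff_left sum_subtractf)
  moreover have "\<not> affine_dependent K" using K unfolding is_triangle_def by simp
  ultimately have "\<forall>v\<in>K. U v = 0"
    using affine_dependent_explicit_finite[OF tri_finite[OF K]] by blast
  then show ?thesis using p unfolding bary_def w'_def[symmetric] U_def by simp
qed

lemma bary_repr:
  assumes K: "is_triangle K"
  shows "sum (\<lambda>q. bary K q x) K = 1 \<and> (\<Sum>q\<in>K. bary K q x *\<^sub>R q) = x"
proof -
  obtain w where w: "sum w K = 1" "(\<Sum>q\<in>K. w q *\<^sub>R q) = x" using bary_ex[OF K] by blast
  have "\<forall>q\<in>K. bary K q x = w q" using bary_unique[OF K w] by blast
  then show ?thesis using w by simp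
qed

lemma bary_sub:
  assumes K: "is_triangle K" and S: "S \<subseteq> K" and w: "sum w S = 1" "(\<Sum>q\<in>S. w q *\<^sub>R q) = x"
    and p: "p \<in> K"
  shows "bary K p x = (if p \<in> S then w p else 0)"
proof -
  have fK: "finite K" using tri_finite[OF K] .
  have KS: "K \<inter> S = S" using S by blast
  have "sum (\<lambda>q. if q \<in> S then w q else 0) K = 1"
    using sum.inter_restrict[OF fK, of w S] KS w by simp
  moreover have "(\<Sum>q\<in>K. (if q \<in> S then w q else 0) *\<^sub>R q) = x"
  proof -
    have "(\<Sum>q\<in>K. (if q \<in> S then w q else 0) *\<^sub>R q) = (\<Sum>q\<in>K. if q \<in> S then w q *\<^sub>R q else 0)"
      by (rule sum.cong) auto
    also have "\<dots> = (\<Sum>q\<in>K \<inter> S. w q *\<^sub>R q)" using sum.inter_restrict[OF fK, of "\<lambda>q. w q *\<^sub>R q" S] by simp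
    finally show ?thesis using KS w by simp
  qed
  ultimately show ?thesis using bary_unique[OF K _ _ p] by simp
qed

lemma bary_vertex:
  assumes K: "is_triangle K" and "p \<in> K" "q \<in> K"
  shows "bary K p q = (if p = q then 1 else 0)"
  using bary_sub[OF K, of "{q}" "\<lambda>_. 1" q p] assms by auto

lemma bary_nonneg:
  assumes K: "is_triangle K" and p: "p \<in> K" and x: "x \<in> convex hull K"
  shows "bary K p x \<ge> 0"
proof -
  obtain u where u: "\<forall>q\<in>K. 0 \<le> u q" "sum u K = 1" "(\<Sum>q\<in>K. u q *\<^sub>R q) = x"
    using x convex_hull_finite[OF tri_finite[OF K]] by blast
  then show ?thesis using bary_unique[OF K u(2,3) p] p by simp
qed

lemma vec2_decomp: "(x::point) = x$1 *\<^sub>R axis 1 1 + x$2 *\<^sub>R axis 2 1"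
  by (simp add: vec_eq_iff forall_2 axis_def)

lemma bary_affine:
  assumes K: "is_triangle K" and p: "p \<in> K"
  shows "\<exists>a c. \<forall>x. bary K p x = a \<bullet> x + c"
proof -
  define e1 :: point where "e1 = axis 1 1"
  define e2 :: point where "e2 = axis 2 1"
  define b0 where "b0 = bary K p 0"
  define b1 where "b1 = bary K p e1"
  define b2 where "b2 = bary K p e2"
  define a where "a = (b1 - b0) *\<^sub>R e1 + (b2 - b0) *\<^sub>R e2"
  have "\<forall>x. bary K p x = a \<bullet> x + b0"
  proof
    fix x :: point
    define W where "W = (\<lambda>q. (1 - x$1 - x$2) * bary K q 0 + x$1 * bary K q e1 + x$2 * bary K q e2)"
    have r0: "sum (\<lambda>q. bary K q 0) K = 1 \<and> (\<Sum>q\<in>K. bary K q 0 *\<^sub>R q) = 0" using bary_repr[OF K] .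
    have r1: "sum (\<lambda>q. bary K q e1) K = 1 \<and> (\<Sum>q\<in>K. bary K q e1 *\<^sub>R q) = e1" using bary_repr[OF K] .
    have r2: "sum (\<lambda>q. bary K q e2) K = 1 \<and> (\<Sum>q\<in>K. bary K q e2 *\<^sub>R q) = e2" using bary_repr[OF K] .
    have "sum W K = (1 - x$1 - x$2) * 1 + x$1 * 1 + x$2 * 1"
      unfolding W_def using r0 r1 r2 by (simp add: sum.distrib sum_distrib_left[symmetric])
    then have sW: "sum W K = 1" by simp
    have "(\<Sum>q\<in>K. W q *\<^sub>R q) = (\<Sum>q\<in>K. (1 - x$1 - x$2) *\<^sub>R (bary K q 0 *\<^sub>R q) + x$1 *\<^sub>R (bary K q e1 *\<^sub>R q) + x$2 *\<^sub>R (bary K q e2 *\<^sub>R q))"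
      unfolding W_def by (rule sum.cong) (simp_all add: scaleR_add_left)
    also have "\<dots> = (1 - x$1 - x$2) *\<^sub>R (\<Sum>q\<in>K. bary K q 0 *\<^sub>R q) + x$1 *\<^sub>R (\<Sum>q\<in>K. bary K q e1 *\<^sub>R q) + x$2 *\<^sub>R (\<Sum>q\<in>K. bary K q e2 *\<^sub>R q)"
      by (simp only: sum.distrib scaleR_sum_right)
    also have "\<dots> = (1 - x$1 - x$2) *\<^sub>R 0 + x$1 *\<^sub>R e1 + x$2 *\<^sub>R e2"
      using r0 r1 r2 by simp
    also have "\<dots> = x" using vec2_decomp[of x] unfolding e1_def e2_def by simp
    finally have "bary K p x = W p" using bary_unique[OF K sW _ p] by simp
    also have "\<dots> = (1 - x$1 - x$2) * b0 + x$1 * b1 + x$2 * b2"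
      unfolding W_def b0_def b1_def b2_def by simp
    also have "\<dots> = a \<bullet> x + b0"
    proof -
      have "a \<bullet> x = (b1 - b0) * x$1 + (b2 - b0) * x$2"
        unfolding a_def e1_def e2_def by (simp add: inner_add_left inner_axis')
      then show ?thesis by (simp add: algebra_simps)
    qed
    finally show "bary K p x = a \<bullet> x + b0" .
  qed
  then show ?thesis by blast
qed


lemma real_alg2:
  fixes a1 a2 b1 b2 u1 u2 w1 w2 :: real
  assumes h1: "a1*u1 + a2*u2 = 1" and h2: "a1*w1 + a2*w2 = 0"
    and h3: "b1*u1 + b2*u2 = 0" and h4: "b1*w1 + b2*w2 = 1" and h5: "u1*w1 + u2*w2 \<ge> 0"
  shows "a1*b1 + a2*b2 \<le> 0"
proof -
  define D where "D = u1*w2 - u2*w1"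
  have e1: "a1*D - w2 = w2*(a1*u1+a2*u2-1) - u2*(a1*w1+a2*w2)" unfolding D_def by algebra
  have e2: "a2*D + w1 = -w1*(a1*u1+a2*u2-1) + u1*(a1*w1+a2*w2)" unfolding D_def by algebra
  have e3: "b1*D + u2 = w2*(b1*u1+b2*u2) - u2*(b1*w1+b2*w2-1)" unfolding D_def by algebra
  have e4: "b2*D - u1 = -w1*(b1*u1+b2*u2) + u1*(b1*w1+b2*w2-1)" unfolding D_def by algebra
  have A1: "a1*D = w2" using e1 h1 h2 by simp
  have A2: "a2*D = -w1" using e2 h1 h2 by simp
  have B1: "b1*D = -u2" using e3 h3 h4 by simp
  have B2: "b2*D = u1" using e4 h3 h4 by simp
  have "D \<noteq> 0"
  proof
    assume "D = 0"
    then have "w1 = 0" "w2 = 0" using A1 A2 by auto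
    then show False using h4 by simp
  qed
  then have Dp: "D*D > 0" by (metis not_real_square_gt_zero)
  have "(a1*b1 + a2*b2) * (D*D) = (a1*D)*(b1*D) + (a2*D)*(b2*D)" by algebra
  also have "\<dots> = -(u1*w1 + u2*w2)" using A1 A2 B1 B2 by (simp add: algebra_simps)
  finally have "(a1*b1 + a2*b2) * (D*D) \<le> 0" using h5 by simp
  then show ?thesis using Dp by (meson mult_pos_pos not_le)
qed

lemma inner2: "(x::point) \<bullet> y = x$1 * y$1 + x$2 * y$2"
  by (simp add: inner_vec_def sum_2)

lemma vec_alg2:
  fixes a b u w :: point
  assumes "a \<bullet> u = 1" "a \<bullet> w = 0" "b \<bullet> u = 0" "b \<bullet> w = 1" "u \<bullet> w \<ge> 0"
  shows "a \<bullet> b \<le> 0"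
  using real_alg2[of "a$1" "u$1" "a$2" "u$2" "w$1" "w$2" "b$1" "b$2"] assms
  unfolding inner2 by (simp add: mult.commute)

lemma vangle_inner:
  assumes "vangle u w \<le> pi / 2"
  shows "u \<bullet> w \<ge> 0"
proof (rule ccontr)
  assume neg: "\<not> u \<bullet> w \<ge> 0"
  then have "u \<noteq> 0" "w \<noteq> 0" by auto
  then have np: "norm u * norm w > 0" by simp
  define t where "t = (u \<bullet> w) / (norm u * norm w)"
  have t0: "t < 0" unfolding t_def using neg np by (simp add: divide_neg_pos)
  have "\<bar>u \<bullet> w\<bar> \<le> norm u * norm w" by (rule Cauchy_Schwarz_ineq2)
  then have "-1 \<le> t" unfolding t_def using np by (simp add: field_simps abs_le_iff)
  then have "arccos 0 < arccos t" using arccos_less_arccos[of t 0] t0 by simp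
  then have "pi / 2 < vangle u w" unfolding vangle_def t_def[symmetric] by simp
  then show False using assms by simp
qed


definition Gb :: "point set \<Rightarrow> point \<Rightarrow> point" where
  "Gb K q = (SOME a. \<exists>c. \<forall>x. bary K q x = a \<bullet> x + c)"

definition Cb :: "point set \<Rightarrow> point \<Rightarrow> real" where
  "Cb K q = (SOME c. \<forall>x. bary K q x = Gb K q \<bullet> x + c)"

lemma bary_GC:
  assumes K: "is_triangle K" and q: "q \<in> K"
  shows "bary K q x = Gb K q \<bullet> x + Cb K q"
proof -
  have "\<exists>c. \<forall>x. bary K q x = Gb K q \<bullet> x + c"
    unfolding Gb_def by (rule someI_ex[OF bary_affine[OF K q]])
  then have "\<forall>x. bary K q x = Gb K q \<bullet> x + Cb K q"
    unfolding Cb_def by (rule someI_ex)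
  then show ?thesis by blast
qed

lemma tri_H2_Gb:
  assumes K: "is_triangle K"
    and H2K: "\<forall>p\<in>K. \<forall>q\<in>K. \<forall>r\<in>K. p \<noteq> q \<and> p \<noteq> r \<and> q \<noteq> r \<longrightarrow> vangle (q - p) (r - p) \<le> pi / 2"
    and p: "p \<in> K" and q: "q \<in> K" and pq: "p \<noteq> q"
  shows "Gb K p \<bullet> Gb K q \<le> 0"
proof -
  have "card (K - {p, q}) = 1" using K p q pq unfolding is_triangle_def
    by (simp add: card_Diff_subset tri_finite[OF K])
  then obtain r where r: "r \<in> K" "r \<noteq> p" "r \<noteq> q"
    by (metis Diff_iff card_1_singletonE insertCI)
  have bv: "\<And>a b. a \<in> K \<Longrightarrow> b \<in> K \<Longrightarrow> Gb K a \<bullet> b + Cb K a = (if a = b then 1 else 0)"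
    using bary_vertex[OF K] bary_GC[OF K] by metis
  have "Gb K p \<bullet> (p - r) = 1" using bv[OF p p] bv[OF p r(1)] r by (simp add: inner_diff_right)
  moreover have "Gb K p \<bullet> (q - r) = 0" using bv[OF p q] bv[OF p r(1)] r pq by (simp add: inner_diff_right)
  moreover have "Gb K q \<bullet> (p - r) = 0" using bv[OF q p] bv[OF q r(1)] r pq by (simp add: inner_diff_right)
  moreover have "Gb K q \<bullet> (q - r) = 1" using bv[OF q q] bv[OF q r(1)] r by (simp add: inner_diff_right)
  moreover have "(p - r) \<bullet> (q - r) \<ge> 0"
    using H2K r p q pq by (intro vangle_inner) blast
  ultimately show ?thesis by (rule vec_alg2)
qed

lemma affine_comb:
  assumes f: "\<forall>x\<in>S. f x = b \<bullet> x + c" and fin: "finite K" and sub: "K \<subseteq> S"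
    and w: "sum w K = 1" "(\<Sum>q\<in>K. w q *\<^sub>R q) = x" and x: "x \<in> S"
  shows "f x = (\<Sum>q\<in>K. w q * f q)"
proof -
  have "(\<Sum>q\<in>K. w q * f q) = (\<Sum>q\<in>K. w q * (b \<bullet> q) + w q * c)"
    using f sub by (intro sum.cong) (auto simp: algebra_simps)
  also have "\<dots> = (\<Sum>q\<in>K. w q * (b \<bullet> q)) + (\<Sum>q\<in>K. w q) * c"
    by (simp add: sum.distrib sum_distrib_right)
  also have "(\<Sum>q\<in>K. w q * (b \<bullet> q)) = b \<bullet> x"
    unfolding w(2)[symmetric] by (simp add: inner_sum_right)
  finally show ?thesis using f x w(1) by simp
qed

lemma tri_grad_nonpos:
  assumes K: "is_triangle K"
    and H2K: "\<forall>p\<in>K. \<forall>q\<in>K. \<forall>r\<in>K. p \<noteq> q \<and> p \<noteq> r \<and> q \<noteq> r \<longrightarrow> vangle (q - p) (r - p) \<le> pi / 2"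
    and p: "p \<in> K" and v: "\<forall>x\<in>convex hull K. v x = b \<bullet> x + c"
    and vmin: "\<forall>q\<in>K. v p \<le> v q"
  shows "b \<bullet> Gb K p \<le> 0"
proof -
  have fK: "finite K" using tri_finite[OF K] .
  have sub: "K \<subseteq> convex hull K" by (rule hull_subset)
  have b_eq: "b = (\<Sum>q\<in>K. v q *\<^sub>R Gb K q)"
  proof (rule affine_eq_on_tri[OF K, of b c _ "\<Sum>q\<in>K. v q * Cb K q"], intro ballI)
    fix x assume x: "x \<in> convex hull K"
    have "b \<bullet> x + c = v x" using v x by simp
    also have "\<dots> = (\<Sum>q\<in>K. bary K q x * v q)"
      using affine_comb[OF v fK sub _ _ x] bary_repr[OF K, of x] by blast
    also have "\<dots> = (\<Sum>q\<in>K. v q * (Gb K q \<bullet> x) + v q * Cb K q)"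
      using bary_GC[OF K] by (intro sum.cong) (auto simp: algebra_simps)
    also have "\<dots> = (\<Sum>q\<in>K. v q *\<^sub>R Gb K q) \<bullet> x + (\<Sum>q\<in>K. v q * Cb K q)"
      by (simp add: sum.distrib inner_sum_left)
    finally show "b \<bullet> x + c = (\<Sum>q\<in>K. v q *\<^sub>R Gb K q) \<bullet> x + (\<Sum>q\<in>K. v q * Cb K q)" .
  qed
  have G0': "0 = (\<Sum>q\<in>K. Gb K q)"
  proof (rule affine_eq_on_tri[OF K, of 0 1 _ "\<Sum>q\<in>K. Cb K q"], intro ballI)
    fix x assume x: "x \<in> convex hull K"
    have "(\<Sum>q\<in>K. Gb K q) \<bullet> x + (\<Sum>q\<in>K. Cb K q) = (\<Sum>q\<in>K. bary K q x)"
      using bary_GC[OF K] by (simp add: inner_sum_left sum.distrib[symmetric])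
    also have "\<dots> = 1" using bary_repr[OF K] by blast
    finally show "0 \<bullet> x + 1 = (\<Sum>q\<in>K. Gb K q) \<bullet> x + (\<Sum>q\<in>K. Cb K q)" by simp
  qed
  then have G0: "(\<Sum>q\<in>K. Gb K q) = 0" by simp
  have "b \<bullet> Gb K p = (\<Sum>q\<in>K. v q * (Gb K q \<bullet> Gb K p))"
    unfolding b_eq by (simp add: inner_sum_left)
  also have "\<dots> = (\<Sum>q\<in>K. (v q - v p) * (Gb K q \<bullet> Gb K p)) + v p * ((\<Sum>q\<in>K. Gb K q) \<bullet> Gb K p)"
    by (simp add: inner_sum_left sum_distrib_left algebra_simps sum_subtractf)
  also have "\<dots> = (\<Sum>q\<in>K. (v q - v p) * (Gb K q \<bullet> Gb K p))" using G0 by simp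
  also have "\<dots> \<le> 0"
  proof (rule sum_nonpos)
    fix q assume q: "q \<in> K"
    show "(v q - v p) * (Gb K q \<bullet> Gb K p) \<le> 0"
    proof (cases "q = p")
      case True then show ?thesis by simp
    next
      case False
      then have "Gb K q \<bullet> Gb K p \<le> 0" using tri_H2_Gb[OF K H2K q p] by simp
      moreover have "v q - v p \<ge> 0" using vmin q by simp
      ultimately show ?thesis by (simp add: mult_nonneg_nonpos)
    qed
  qed
  finally show ?thesis .
qed


definition hat :: "point set set \<Rightarrow> point \<Rightarrow> point \<Rightarrow> real" where
  "hat T p x = (if \<exists>K\<in>T. p \<in> K \<and> x \<in> convex hull K
      then bary (SOME K. K \<in> T \<and> p \<in> K \<and> x \<in> convex hull K) p x else 0)"

lemma mesh_tri: "conforming_mesh T \<Omega> \<Longrightarrow> K \<in> T \<Longrightarrow> is_triangle K"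
  unfolding conforming_mesh_def by auto

lemma bary_consistent:
  assumes M: "conforming_mesh T \<Omega>" and K: "K \<in> T" and L: "L \<in> T"
    and xK: "x \<in> convex hull K" and xL: "x \<in> convex hull L" and p: "p \<in> L"
  shows "bary L p x = (if p \<in> K then bary K p x else 0)"
proof (cases "K = L")
  case True then show ?thesis using p by simp
next
  case False
  have tK: "is_triangle K" and tL: "is_triangle L" using M K L mesh_tri by auto
  have "x \<in> convex hull (K \<inter> L)" using M K L False xK xL unfolding conforming_mesh_def by blast
  moreover have fS: "finite (K \<inter> L)" using tri_finite[OF tK] by simp
  ultimately obtain u where u: "sum u (K \<inter> L) = 1" "(\<Sum>q\<in>K \<inter> L. u q *\<^sub>R q) = x"
    using convex_hull_finite[OF fS] by blast
  have bL: "bary L p x = (if p \<in> K \<inter> L then u p else 0)"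
    using bary_sub[OF tL _ u p] by blast
  show ?thesis
  proof (cases "p \<in> K")
    case True
    then have "bary K p x = (if p \<in> K \<inter> L then u p else 0)"
      using bary_sub[OF tK _ u] by blast
    then show ?thesis using bL True by simp
  next
    case False then show ?thesis using bL by simp
  qed
qed

lemma hat_on:
  assumes M: "conforming_mesh T \<Omega>" and K: "K \<in> T" and x: "x \<in> convex hull K"
  shows "hat T p x = (if p \<in> K then bary K p x else 0)"
proof (cases "\<exists>L\<in>T. p \<in> L \<and> x \<in> convex hull L")
  case True
  define L where "L = (SOME L. L \<in> T \<and> p \<in> L \<and> x \<in> convex hull L)"
  have L: "L \<in> T \<and> p \<in> L \<and> x \<in> convex hull L"
    unfolding L_def by (rule someI_ex) (use True in blast)
  have "hat T p x = bary L p x" unfolding hat_def L_def using True by simp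
  then show ?thesis using bary_consistent[OF M K _ x] L by simp
next
  case False
  then have "p \<notin> K" using K x by blast
  then show ?thesis using False unfolding hat_def by auto
qed

lemma hat_P1: assumes M: "conforming_mesh T \<Omega>" shows "P1cont T (hat T p)"
  unfolding P1cont_def
proof
  fix K assume K: "K \<in> T"
  show "\<exists>a c. \<forall>x\<in>convex hull K. hat T p x = a \<bullet> x + c"
  proof (cases "p \<in> K")
    case True
    obtain a c where "\<forall>x. bary K p x = a \<bullet> x + c" using bary_affine[OF mesh_tri[OF M K] True] by blast
    then show ?thesis using hat_on[OF M K] True by metis
  next
    case False
    then have "\<forall>x\<in>convex hull K. hat T p x = 0 \<bullet> x + 0" using hat_on[OF M K] by simp
    then show ?thesis by blast
  qed
qed

lemma hat_vertex:
  assumes M: "conforming_mesh T \<Omega>" and K: "K \<in> T" and q: "q \<in> K"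
  shows "hat T p q = (if p \<in> K \<and> p = q then 1 else 0)"
  using hat_on[OF M K hull_inc[OF q]] bary_vertex[OF mesh_tri[OF M K] _ q] by auto

lemma hat_nonneg:
  assumes M: "conforming_mesh T \<Omega>" and K: "K \<in> T" and x: "x \<in> convex hull K"
  shows "hat T p x \<ge> 0"
  using hat_on[OF M K x] bary_nonneg[OF mesh_tri[OF M K] _ x] by auto

lemma lumped_hat:
  assumes M: "conforming_mesh T \<Omega>"
  shows "lumped T f (hat T p) = (\<Sum>K\<in>T. area K / 3 * (if p \<in> K then 1 else 0)) * f p"
proof -
  have "\<And>K. K \<in> T \<Longrightarrow> (\<Sum>q\<in>K. f q * hat T p q) = (if p \<in> K then 1 else 0) * f p"
  proof -
    fix K assume K: "K \<in> T"
    have "(\<Sum>q\<in>K. f q * hat T p q) = (\<Sum>q\<in>K. if q = p then (if p \<in> K then f p else 0) else 0)"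
      using hat_vertex[OF M K] by (intro sum.cong) auto
    also have "\<dots> = (if p \<in> K then 1 else 0) * f p"
      using tri_finite[OF mesh_tri[OF M K]] by (simp add: sum.delta)
    finally show "(\<Sum>q\<in>K. f q * hat T p q) = (if p \<in> K then 1 else 0) * f p" .
  qed
  then have "lumped T f (hat T p) = (\<Sum>K\<in>T. area K / 3 * (if p \<in> K then 1 else 0) * f p)"
    unfolding lumped_def by (intro sum.cong) auto
  then show ?thesis by (simp add: sum_distrib_right)
qed

lemma stiff_hat_nonpos:
  assumes M: "conforming_mesh T \<Omega>" and H2: "H2 T" and v: "P1cont T v"
    and vmin: "\<forall>q\<in>\<Union>T. v p \<le> v q"
  shows "stiff T v (hat T p) \<le> 0"
  unfolding stiff_def
proof (rule sum_nonpos)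
  fix K assume K: "K \<in> T"
  have tK: "is_triangle K" using mesh_tri[OF M K] .
  have aK: "area K \<ge> 0" using tri_area_pos[OF tK] by simp
  obtain b c where bc: "\<forall>x\<in>convex hull K. v x = b \<bullet> x + c" using v K unfolding P1cont_def by blast
  have gv: "grad_on K v = b" by (rule grad_on_eq[OF tK bc])
  show "area K * (grad_on K v \<bullet> grad_on K (hat T p)) \<le> 0"
  proof (cases "p \<in> K")
    case True
    have "\<forall>x\<in>convex hull K. hat T p x = Gb K p \<bullet> x + Cb K p"
      using hat_on[OF M K] bary_GC[OF tK True] True by simp
    then have gh: "grad_on K (hat T p) = Gb K p" by (rule grad_on_eq[OF tK])
    have H2K: "\<forall>p\<in>K. \<forall>q\<in>K. \<forall>r\<in>K. p \<noteq> q \<and> p \<noteq> r \<and> q \<noteq> r \<longrightarrow> vangle (q - p) (r - p) \<le> pi / 2"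
      using H2 K unfolding H2_def by blast
    have "b \<bullet> Gb K p \<le> 0" using tri_grad_nonpos[OF tK H2K True bc] vmin K by blast
    then show ?thesis using aK gv gh by (simp add: mult_nonneg_nonpos)
  next
    case False
    have "\<forall>x\<in>convex hull K. hat T p x = 0 \<bullet> x + 0" using hat_on[OF M K] False by simp
    then have "grad_on K (hat T p) = 0" by (rule grad_on_eq[OF tK])
    then show ?thesis by simp
  qed
qed

lemma L2_01_hat_nonneg:
  assumes M: "conforming_mesh T \<Omega>" and u: "\<forall>K\<in>T. u K \<ge> 0"
  shows "L2_01 T u (hat T p) \<ge> 0"
  unfolding L2_01_def
proof (rule sum_nonneg)
  fix K assume K: "K \<in> T"
  have "integral (convex hull K) (hat T p) \<ge> 0"
  proof (cases "hat T p integrable_on convex hull K")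
    case True then show ?thesis using hat_nonneg[OF M K] by (intro integral_nonneg) auto
  next
    case False then show ?thesis by (simp add: not_integrable_integral)
  qed
  then show "u K * integral (convex hull K) (hat T p) \<ge> 0" using u K by simp
qed


lemma upw_term: "(posp m * posp s - negp m * posp t) * (negp s - negp t) \<le> 0"
proof -
  have z: "posp s * negp s = 0" "posp t * negp t = 0" unfolding posp_def negp_def by auto
  have nn: "posp m \<ge> 0" "negp m \<ge> 0" "posp s \<ge> 0" "posp t \<ge> 0" "negp s \<ge> 0" "negp t \<ge> 0"
    unfolding posp_def negp_def by auto
  have "posp m * posp s * negp t \<ge> 0" "negp m * posp t * negp s \<ge> 0" using nn by simp_all
  moreover have "(posp m * posp s - negp m * posp t) * (negp s - negp t)
     = posp m * (posp s * negp s) + negp m * (posp t * negp t) - posp m * posp s * negp t - negp m * posp t * negp s"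
    by (simp add: algebra_simps)
  ultimately show ?thesis using z by simp
qed

lemma a_upw_neg_nonpos:
  assumes M: "conforming_mesh T \<Omega>"
  shows "a_upw T \<mu> (\<lambda>K. posp (u K)) (\<lambda>K. negp (u K)) \<le> 0"
  unfolding a_upw_def
proof (rule sum_nonpos, clarify)
  fix K L assume KL: "(K, L) \<in> interior_edge_pairs T"
  then have K: "K \<in> T" unfolding interior_edge_pairs_def by simp
  have "finite (K \<inter> L)" using tri_finite[OF mesh_tri[OF M K]] by simp
  then have "edge_length K L \<ge> 0" unfolding edge_length_def by (simp add: diameter_ge_0 finite_imp_bounded)
  moreover have "D_edge K L \<ge> 0" unfolding D_edge_def by simp
  ultimately have c: "1 / 2 * (edge_length K L / D_edge K L) \<ge> 0" by simp
  show "1 / 2 * (edge_length K L / D_edge K L) *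
      (posp (\<mu> K - \<mu> L) * posp (u K) - negp (\<mu> K - \<mu> L) * posp (u L)) * (negp (u K) - negp (u L)) \<le> 0"
    using mult_nonneg_nonpos[OF c upw_term] by (simp add: mult.assoc)
qed

lemma vertex_nonneg:
  assumes M: "conforming_mesh T \<Omega>" and v: "P1cont T v" and pos: "\<forall>x\<in>\<Omega>. v x \<ge> 0"
    and K: "K \<in> T" and p: "p \<in> convex hull K"
  shows "v p \<ge> 0"
proof -
  have tK: "is_triangle K" using mesh_tri[OF M K] .
  obtain a c where ac: "\<forall>x\<in>convex hull K. v x = a \<bullet> x + c" using v K unfolding P1cont_def by blast
  have cl: "closure \<Omega> = (\<Union>K\<in>T. convex hull K)" using M unfolding conforming_mesh_def by simp
  have hK: "convex hull K \<subseteq> closure \<Omega>" using cl K by blast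
  have "interior (convex hull K) \<subseteq> closure (interior (convex hull K) \<inter> \<Omega>)"
    using open_Int_closure_subset[of "interior (convex hull K)" \<Omega>] hK interior_subset by blast
  also have "\<dots> \<subseteq> closure (convex hull K \<inter> \<Omega>)"
    by (intro closure_mono) (use interior_subset in blast)
  finally have "closure (interior (convex hull K)) \<subseteq> closure (convex hull K \<inter> \<Omega>)"
    by (metis closure_closure closure_mono)
  moreover have "closure (interior (convex hull K)) = convex hull K"
    using convex_closure_interior[OF convex_convex_hull tri_interior[OF tK]]
      closure_closed[OF compact_imp_closed[OF compact_convex_hull[OF finite_imp_compact[OF tri_finite[OF tK]]]]]
    by simp
  moreover have "closure (convex hull K \<inter> \<Omega>) \<subseteq> {x. a \<bullet> x \<ge> - c}"
    by (rule closure_minimal) (use ac pos closed_halfspace_ge in force)+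
  ultimately have "a \<bullet> p \<ge> - c" using p by blast
  then show ?thesis using ac p by simp
qed


theorem mainTheorem2:
  fixes T :: "point set set" and \<Omega> :: "point set"
    and k0 k1 k2 k3 k4 \<tau> \<Delta>t \<epsilon> :: real
    and u0 u1 \<mu>1 :: "point set \<Rightarrow> real"
    and v0 v1 :: "point \<Rightarrow> real"
  assumes mesh: "conforming_mesh T \<Omega>"
    and H1: "H1 T" and H2: "H2 T"
    and k_pos: "k0 > 0" "k1 > 0" "k2 > 0" "k3 > 0" "k4 > 0"
    and tau: "\<tau> = 0 \<or> \<tau> = 1"
    and dt: "\<Delta>t > 0" and eps: "\<epsilon> > 0"
    and u0_nonneg: "\<forall>K\<in>T. u0 K \<ge> 0"
    and v0_P1: "P1cont T v0"
    and v0_nonneg: "\<tau> > 0 \<longrightarrow> (\<forall>x\<in>\<Omega>. v0 x \<ge> 0)"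
    and v1_P1: "P1cont T v1"
    and step1: "\<forall>vb. P1cont T vb \<longrightarrow>
        \<tau> * lumped T (\<lambda>x. (v1 x - v0 x) / \<Delta>t) vb + k2 * stiff T v1 vb
        + k3 * lumped T v1 vb - k4 * L2_01 T u0 vb = 0"
    and u1_pos: "\<forall>K\<in>T. u1 K + \<epsilon> > 0"
    and step2u: "\<forall>ub. L2_00 T (\<lambda>K. (u1 K - u0 K) / \<Delta>t) ub
        + a_upw T \<mu>1 (\<lambda>K. posp (u1 K)) ub = 0"
    and step2mu: "\<forall>mb. L2_00 T \<mu>1 mb - k0 * L2_00 T (\<lambda>K. ln (u1 K + \<epsilon>)) mb
        + k1 * L2_01 T mb v1 = 0"
  shows "(\<forall>K\<in>T. u1 K \<ge> 0) \<and> (\<forall>x\<in>\<Omega>. v1 x \<ge> 0)"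
proof
  have finT: "finite T" using mesh unfolding conforming_mesh_def by simp
  show "\<forall>K\<in>T. u1 K \<ge> 0"
  proof (rule ccontr)
    assume "\<not> (\<forall>K\<in>T. u1 K \<ge> 0)"
    then obtain K0 where K0: "K0 \<in> T" "u1 K0 < 0" by force
    define f where "f = (\<lambda>K. area K * ((u1 K - u0 K) / \<Delta>t) * negp (u1 K))"
    have fle: "\<And>K. K \<in> T \<Longrightarrow> f K \<le> 0"
    proof -
      fix K assume K: "K \<in> T"
      have aK: "area K > 0" using tri_area_pos[OF mesh_tri[OF mesh K]] .
      show "f K \<le> 0"
      proof (cases "u1 K \<ge> 0")
        case True then show ?thesis unfolding f_def negp_def by simp
      next
        case False
        then have "u1 K - u0 K < 0" using u0_nonneg K by force
        then have "(u1 K - u0 K) / \<Delta>t < 0" using dt by (simp add: divide_neg_pos)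
        moreover have "negp (u1 K) > 0" using False unfolding negp_def by simp
        ultimately have "((u1 K - u0 K) / \<Delta>t) * negp (u1 K) < 0" by (rule mult_neg_pos)
        then have "area K * (((u1 K - u0 K) / \<Delta>t) * negp (u1 K)) < 0" by (rule mult_pos_neg[OF aK])
        then show ?thesis unfolding f_def by (simp only: mult.assoc less_imp_le)
      qed
    qed
    have fK0: "f K0 < 0"
    proof -
      have aK: "area K0 > 0" using tri_area_pos[OF mesh_tri[OF mesh K0(1)]] .
      have "u1 K0 - u0 K0 < 0" using u0_nonneg K0 by force
      then have "(u1 K0 - u0 K0) / \<Delta>t < 0" using dt by (simp add: divide_neg_pos)
      moreover have "negp (u1 K0) > 0" using K0 unfolding negp_def by simp
      ultimately have "((u1 K0 - u0 K0) / \<Delta>t) * negp (u1 K0) < 0" by (rule mult_neg_pos)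
      then have "area K0 * (((u1 K0 - u0 K0) / \<Delta>t) * negp (u1 K0)) < 0" by (rule mult_pos_neg[OF aK])
      then show ?thesis unfolding f_def by (simp only: mult.assoc)
    qed
    have "sum f T = f K0 + sum f (T - {K0})" using sum.remove[OF finT K0(1)] .
    moreover have "sum f (T - {K0}) \<le> 0" using fle by (intro sum_nonpos) auto
    ultimately have "sum f T < 0" using fK0 by simp
    moreover have "sum f T = L2_00 T (\<lambda>K. (u1 K - u0 K) / \<Delta>t) (\<lambda>K. negp (u1 K))"
      unfolding f_def L2_00_def ..
    moreover have "a_upw T \<mu>1 (\<lambda>K. posp (u1 K)) (\<lambda>K. negp (u1 K)) \<le> 0"
      by (rule a_upw_neg_nonpos[OF mesh])
    ultimately show False using step2u[rule_format, of "\<lambda>K. negp (u1 K)"] by simp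
  qed
next
  have finT: "finite T" using mesh unfolding conforming_mesh_def by simp
  define V where "V = \<Union>T"
  have finV: "finite V" unfolding V_def using finT mesh_tri[OF mesh] tri_finite by blast
  have cl: "closure \<Omega> = (\<Union>K\<in>T. convex hull K)" using mesh unfolding conforming_mesh_def by simp
  have "\<Omega> \<noteq> {}" using mesh unfolding conforming_mesh_def by simp
  then obtain x0 where "x0 \<in> \<Omega>" by blast
  then have "x0 \<in> closure \<Omega>" using closure_subset by blast
  then obtain K1 where K1: "K1 \<in> T" "x0 \<in> convex hull K1" using cl by blast
  then have "K1 \<noteq> {}" by auto
  then have Vne: "V \<noteq> {}" unfolding V_def using K1 by blast
  define m where "m = Min (v1 ` V)"
  have "m \<in> v1 ` V" unfolding m_def using finV Vne by simp
  then obtain p where p: "p \<in> V" "v1 p = m" by blast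
  have pmin: "\<forall>q\<in>V. v1 p \<le> v1 q" using p finV unfolding m_def by simp
  have vp: "v1 p \<ge> 0"
  proof (rule ccontr)
    assume neg: "\<not> v1 p \<ge> 0"
    obtain K0 where K0: "K0 \<in> T" "p \<in> K0" using p unfolding V_def by blast
    define Mp where "Mp = (\<Sum>K\<in>T. area K / 3 * (if p \<in> K then 1 else 0))"
    have "area K0 / 3 * (if p \<in> K0 then 1 else 0) \<le> Mp" unfolding Mp_def
      using finT K0 by (intro member_le_sum) (auto intro: less_imp_le tri_area_pos mesh_tri[OF mesh])
    moreover have "area K0 > 0" using tri_area_pos[OF mesh_tri[OF mesh K0(1)]] .
    ultimately have Mpos: "Mp > 0" using K0 by simp
    have e: "\<tau> * (Mp * ((v1 p - v0 p) / \<Delta>t)) + k2 * stiff T v1 (hat T p)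
        + k3 * (Mp * v1 p) - k4 * L2_01 T u0 (hat T p) = 0"
      using step1[rule_format, OF hat_P1[OF mesh, of p]] lumped_hat[OF mesh] unfolding Mp_def by simp
    have S: "stiff T v1 (hat T p) \<le> 0"
      using stiff_hat_nonpos[OF mesh H2 v1_P1] pmin unfolding V_def by blast
    have I: "L2_01 T u0 (hat T p) \<ge> 0" using L2_01_hat_nonneg[OF mesh u0_nonneg] .
    have t1: "\<tau> * (Mp * ((v1 p - v0 p) / \<Delta>t)) \<le> 0"
      using tau
    proof
      assume "\<tau> = 1"
      then have "v0 p \<ge> 0" using v0_nonneg vertex_nonneg[OF mesh v0_P1 _ K0(1) hull_inc[OF K0(2)]] by simp
      then have "(v1 p - v0 p) / \<Delta>t < 0" using neg dt by (simp add: divide_neg_pos)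
      then have "Mp * ((v1 p - v0 p) / \<Delta>t) < 0" by (rule mult_pos_neg[OF Mpos])
      then show ?thesis using \<open>\<tau> = 1\<close> by (simp only: mult_1 less_imp_le)
    qed simp
    have "k2 * stiff T v1 (hat T p) \<le> 0" using S k_pos by (simp add: mult_pos_neg mult_nonneg_nonpos)
    moreover have "k3 * (Mp * v1 p) < 0" using k_pos Mpos neg by (simp add: mult_pos_neg)
    moreover have "k4 * L2_01 T u0 (hat T p) \<ge> 0" using I k_pos by simp
    ultimately show False using e t1 by linarith
  qed
  show "\<forall>x\<in>\<Omega>. v1 x \<ge> 0"
  proof
    fix x assume "x \<in> \<Omega>"
    then have "x \<in> closure \<Omega>" using closure_subset by blast
    then obtain K where K: "K \<in> T" "x \<in> convex hull K" using cl by blast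
    have tK: "is_triangle K" using mesh_tri[OF mesh K(1)] .
    obtain u where u: "\<forall>q\<in>K. 0 \<le> u q" "sum u K = 1" "(\<Sum>q\<in>K. u q *\<^sub>R q) = x"
      using K(2) convex_hull_finite[OF tri_finite[OF tK]] by blast
    obtain a c where ac: "\<forall>y\<in>convex hull K. v1 y = a \<bullet> y + c" using v1_P1 K unfolding P1cont_def by blast
    have "v1 x = (\<Sum>q\<in>K. u q * v1 q)"
      by (rule affine_comb[OF ac tri_finite[OF tK] hull_subset u(2,3) K(2)])
    also have "\<dots> \<ge> 0"
    proof (rule sum_nonneg)
      fix q assume q: "q \<in> K"
      then have "v1 q \<ge> 0" using pmin vp K unfolding V_def by force
      then show "u q * v1 q \<ge> 0" using u q by simp
    qed
    finally show "v1 x \<ge> 0" .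
  qed
qed

end
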